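(* Let $n\ge 1$ and $M\ge 1$ be integers, let $\mathcal{X}=\{x^{(1)},\dots,x^{(L)}\}\subset\mathbb{C}$ be a finite set of $L$ channel input symbols, let $\sigma^2>0$, let $g:\mathbb{C}\to[0,+\infty]$ be measurable, let $\epsilon>0$, $B>0$ and $\delta\in\mathbb{R}$. Let $\mathscr{C}$ be an $(n,M,\epsilon,B,\delta)$-code (as defined in the context). Then $$\delta\ge\Big(1-\frac1B\sum_{\ell=1}^L P_{\mathscr{C}}(x^{(\ell)})\,\mathbb{E}\big[g(x^{(\ell)}+W)\big]\Big)^+,$$ where $(a)^+=\max(a,0)$ and $W$ is a complex circularly symmetric Gaussian random variable whose real and imaginary parts have zero means and variances $\sigma^2/2$.
   Context: Channel: for an input $\boldsymbol{x}\in\mathbb{C}^n$ the outputs are $\boldsymbol{Y}=\boldsymbol{x}+\boldsymbol{N}_1$ and $\boldsymbol{Z}=\boldsymbol{x}+\boldsymbol{N}_2$, where all components of $\boldsymbol{N}_1,\boldsymbol{N}_2$ are i.i.d. complex circularly symmetric Gaussian with real and imaginary parts of zero mean and variance $\sigma^2/2$; so $f_{Y|X}(y|x)=\frac{1}{\pi\sigma^2}\exp(-|y-x|^2/\sigma^2)$ per coordinate and $f_{\boldsymbol{Y}|\boldsymbol{X}}(\boldsymbol{y}|\boldsymbol{x})=\prod_t f_{Y|X}(y_t|x_t)$ (same for $\boldsymbol{Z}$). An $(n,M)$-code is $\mathscr{C}=\{(\boldsymbol{u}(i),\mathcal{D}_i)\}_{i=1}^M$ with codewords $\boldsymbol{u}(i)=(u_1(i),\dots,u_n(i))\in\mathcal{X}^n$,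 $|u_t(i)|\le P$ for a fixed peak power $P>0$, and pairwise disjoint measurable decoding sets $\mathcal{D}_i\subseteq\mathbb{C}^n$; $M\le 2^{n\lfloor\log_2L\rfloor}$. Error probabilities: $\gamma_i(\mathscr{C})=1-\int_{\mathcal{D}_i}f_{\boldsymbol{Y}|\boldsymbol{X}}(\boldsymbol{y}|\boldsymbol{u}(i))d\boldsymbol{y}$, $\gamma(\mathscr{C})=\frac1M\sum_i\gamma_i$; $(n,M,\epsilon)$-code means $\gamma(\mathscr{C})<\epsilon$. With $\bar g(\boldsymbol z)=\frac1n\sum_t g(z_t)$: $\theta_i(\mathscr{C},B)=\Pr[\bar g(\boldsymbol Z)<B\mid\boldsymbol X=\boldsymbol u(i)]$, $\theta(\mathscr{C},B)=\frac1M\sum_i\theta_i$; $(n,M,\epsilon,B,\delta)$-code means an $(n,M,\epsilon)$-code with $\theta(\mathscr{C},B)<\delta$. Types: $P_{\boldsymbol u(i)}(x^{(\ell)})=\frac1n\#\{t:u_t(i)=x^{(\ell)}\}$, $P_{\mathscr{C}}=\frac1M\sum_iP_{\boldsymbol u(i)}$. *)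

theory Defs
  imports "HOL-Probability.Probability"
begin

text \<open>Complex circularly symmetric Gaussian density with mean x and total variance s2
  (real and imaginary parts each of variance s2/2): f(y|x) = exp(-|y-x|^2/s2)/(pi s2).\<close>
definition cgauss_pdf :: "real \<Rightarrow> complex \<Rightarrow> complex \<Rightarrow> real" where
  "cgauss_pdf s2 x y = exp (- ((cmod (y - x))\<^sup>2) / s2) / (pi * s2)"

text \<open>Output distribution on C^n (coordinates indexed by 1..n) when codeword u is sent;
  the same law governs both Y and Z.\<close>
definition channel_out :: "real \<Rightarrow> nat \<Rightarrow> (nat \<Rightarrow> complex) \<Rightarrow> (nat \<Rightarrow> complex) measure" where
  "channel_out s2 n u = PiM {1..n} (\<lambda>t. density lborel (\<lambda>y. ennreal (cgauss_pdf s2 (u t) y)))"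

definition gbar :: "(complex \<Rightarrow> ennreal) \<Rightarrow> nat \<Rightarrow> (nat \<Rightarrow> complex) \<Rightarrow> ennreal" where
  "gbar g n z = (\<Sum>t\<in>{1..n}. g (z t)) / of_nat n"

definition is_code :: "complex set \<Rightarrow> real \<Rightarrow> nat \<Rightarrow> nat \<Rightarrow> (nat \<Rightarrow> nat \<Rightarrow> complex)
    \<Rightarrow> (nat \<Rightarrow> (nat \<Rightarrow> complex) set) \<Rightarrow> bool" where
  "is_code X P n M u D \<longleftrightarrow>
     (\<forall>i\<in>{1..M}. \<forall>t\<in>{1..n}. u i t \<in> X \<and> cmod (u i t) \<le> P) \<and>
     (\<forall>i\<in>{1..M}. D i \<in> sets (PiM {1..n} (\<lambda>_. (lborel :: complex measure)))) \<and>
     disjoint_family_on D {1..M} \<and>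
     M \<le> 2 ^ (n * nat \<lfloor>log 2 (real (card X))\<rfloor>)"

definition avg_error :: "real \<Rightarrow> nat \<Rightarrow> nat \<Rightarrow> (nat \<Rightarrow> nat \<Rightarrow> complex)
    \<Rightarrow> (nat \<Rightarrow> (nat \<Rightarrow> complex) set) \<Rightarrow> real" where
  "avg_error s2 n M u D =
     (\<Sum>i\<in>{1..M}. 1 - measure (channel_out s2 n (u i)) (D i)) / real M"

definition avg_theta :: "real \<Rightarrow> (complex \<Rightarrow> ennreal) \<Rightarrow> real \<Rightarrow> nat \<Rightarrow> nat
    \<Rightarrow> (nat \<Rightarrow> nat \<Rightarrow> complex) \<Rightarrow> real" where
  "avg_theta s2 g B n M u =
     (\<Sum>i\<in>{1..M}. measure (channel_out s2 n (u i))
        {z \<in> space (channel_out s2 n (u i)). gbar g n z < ennreal B}) / real M"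

definition is_code_eps :: "complex set \<Rightarrow> real \<Rightarrow> real \<Rightarrow> nat \<Rightarrow> nat \<Rightarrow> real
    \<Rightarrow> (nat \<Rightarrow> nat \<Rightarrow> complex) \<Rightarrow> (nat \<Rightarrow> (nat \<Rightarrow> complex) set) \<Rightarrow> bool" where
  "is_code_eps X P s2 n M eps u D \<longleftrightarrow> is_code X P n M u D \<and> avg_error s2 n M u D < eps"

definition is_code_full :: "complex set \<Rightarrow> real \<Rightarrow> real \<Rightarrow> (complex \<Rightarrow> ennreal) \<Rightarrow> nat \<Rightarrow> nat
    \<Rightarrow> real \<Rightarrow> real \<Rightarrow> real \<Rightarrow> (nat \<Rightarrow> nat \<Rightarrow> complex) \<Rightarrow> (nat \<Rightarrow> (nat \<Rightarrow> complex) set) \<Rightarrow> bool" where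
  "is_code_full X P s2 g n M eps B delta u D \<longleftrightarrow>
     is_code_eps X P s2 n M eps u D \<and> avg_theta s2 g B n M u < delta"

definition cw_type :: "nat \<Rightarrow> (nat \<Rightarrow> complex) \<Rightarrow> complex \<Rightarrow> real" where
  "cw_type n v x = real (card {t \<in> {1..n}. v t = x}) / real n"

definition code_type :: "nat \<Rightarrow> nat \<Rightarrow> (nat \<Rightarrow> nat \<Rightarrow> complex) \<Rightarrow> complex \<Rightarrow> real" where
  "code_type n M u x = (\<Sum>i\<in>{1..M}. cw_type n (u i) x) / real M"

end

theory Submission
  imports Defs
begin

lemma cgauss_split:
  assumes "s2 > 0"
  shows "cgauss_pdf s2 0 w = normal_density 0 (sqrt (s2/2)) (Re w) * normal_density 0 (sqrt (s2/2)) (Im w)"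
proof -
  have sq: "(sqrt (s2/2))\<^sup>2 = s2/2" using assms by simp
  have "sqrt (pi * s2) * sqrt (pi * s2) = pi * s2" using assms by simp
  moreover have "exp (- (Re w)\<^sup>2 / s2) * exp (- (Im w)\<^sup>2 / s2) = exp (- ((cmod w)\<^sup>2) / s2)"
    by (simp add: exp_add[symmetric] cmod_power2 add_divide_distrib diff_divide_distrib)
  ultimately show ?thesis
    unfolding cgauss_pdf_def normal_density_def sq using assms
    by (simp add: field_simps)
qed

lemma inner_complex_basis: "w \<bullet> (1::complex) = Re w" "w \<bullet> \<i> = Im w"
  by (simp_all add: inner_complex_def)

lemma nn_integral_normal_density_1: assumes "\<sigma> > 0" shows "(\<integral>\<^sup>+ x. ennreal (normal_density \<mu> \<sigma> x) \<partial>lborel) = 1"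
proof -
  interpret prob_space "density lborel (normal_density \<mu> \<sigma>)" by (rule prob_space_normal_density) (rule assms)
  show ?thesis using emeasure_space_1 by (simp add: emeasure_density)
qed

lemma cgauss_int_1:
  assumes "s2 > 0"
  shows "(\<integral>\<^sup>+ w. ennreal (cgauss_pdf s2 0 w) \<partial>lborel) = 1"
proof -
  let ?f = "\<lambda>b::complex. \<lambda>x. ennreal (normal_density 0 (sqrt (s2/2)) x)"
  have "(\<integral>\<^sup>+ w. ennreal (cgauss_pdf s2 0 w) \<partial>lborel) = (\<integral>\<^sup>+ w. (\<Prod>b\<in>Basis. ?f b (w \<bullet> b)) \<partial>lborel)"
    by (rule nn_integral_cong) (simp add: Basis_complex_def inner_complex_basis cgauss_split[OF assms] ennreal_mult)
  also have "\<dots> = (\<Prod>b\<in>Basis. (\<integral>\<^sup>+x. ?f b x \<partial>lborel))"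
    by (rule nn_integral_lborel_prod) auto
  also have "\<dots> = 1" using assms by (simp add: nn_integral_normal_density_1)
  finally show ?thesis .
qed

lemma nn_integral_lborel_shift:
  fixes h :: "complex \<Rightarrow> ennreal"
  assumes "h \<in> borel_measurable borel"
  shows "(\<integral>\<^sup>+ y. h y \<partial>lborel) = (\<integral>\<^sup>+ w. h (x + w) \<partial>lborel)"
proof -
  have "(\<integral>\<^sup>+ y. h y \<partial>lborel) = (\<integral>\<^sup>+ y. h y \<partial>distr lborel borel ((+) x))"
    by (simp add: lborel_distr_plus)
  also have "\<dots> = (\<integral>\<^sup>+ w. h (x + w) \<partial>lborel)"
    using assms by (subst nn_integral_distr) auto
  finally show ?thesis .
qed

lemma cgauss_shift: "cgauss_pdf s2 x (x + w) = cgauss_pdf s2 0 w"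
  by (simp add: cgauss_pdf_def)

lemma cgauss_meas[measurable]: "(\<lambda>y. cgauss_pdf s2 x y) \<in> borel_measurable borel"
  unfolding cgauss_pdf_def by measurable

lemma prob_space_cgauss:
  assumes "s2 > 0"
  shows "prob_space (density lborel (\<lambda>y. ennreal (cgauss_pdf s2 x y)))"
proof
  have "emeasure (density lborel (\<lambda>y. ennreal (cgauss_pdf s2 x y))) UNIV = (\<integral>\<^sup>+ y. ennreal (cgauss_pdf s2 x y) \<partial>lborel)"
    by (simp add: emeasure_density)
  also have "\<dots> = (\<integral>\<^sup>+ w. ennreal (cgauss_pdf s2 x (x + w)) \<partial>lborel)"
    by (rule nn_integral_lborel_shift) measurable
  also have "\<dots> = 1" by (simp add: cgauss_shift cgauss_int_1[OF assms])
  finally show "emeasure (density lborel (\<lambda>y. ennreal (cgauss_pdf s2 x y))) (space (density lborel (\<lambda>y. ennreal (cgauss_pdf s2 x y)))) = 1"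
    by simp
qed

lemma cgauss_expect:
  assumes "s2 > 0" and g[measurable]: "g \<in> borel_measurable borel"
  shows "(\<integral>\<^sup>+ y. g y \<partial>density lborel (\<lambda>y. ennreal (cgauss_pdf s2 x y)))
     = (\<integral>\<^sup>+ w. g (x + w) * ennreal (cgauss_pdf s2 0 w) \<partial>lborel)"
proof -
  have "(\<integral>\<^sup>+ y. g y \<partial>density lborel (\<lambda>y. ennreal (cgauss_pdf s2 x y)))
      = (\<integral>\<^sup>+ y. ennreal (cgauss_pdf s2 x y) * g y \<partial>lborel)"
    by (subst nn_integral_density) auto
  also have "\<dots> = (\<integral>\<^sup>+ w. ennreal (cgauss_pdf s2 x (x + w)) * g (x + w) \<partial>lborel)"
    by (rule nn_integral_lborel_shift) measurable
  also have "\<dots> = (\<integral>\<^sup>+ w. g (x + w) * ennreal (cgauss_pdf s2 0 w) \<partial>lborel)"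
    by (simp add: cgauss_shift mult.commute)
  finally show ?thesis .
qed

lemma prob_space_channel:
  assumes "s2 > 0" shows "prob_space (channel_out s2 n v)"
  unfolding channel_out_def by (rule prob_space_PiM) (rule prob_space_cgauss[OF assms])

lemma gbar_meas[measurable]:
  assumes [measurable]: "g \<in> borel_measurable borel"
  shows "gbar g n \<in> borel_measurable (channel_out s2 n v)"
  unfolding gbar_def channel_out_def by measurable

lemma channel_expect:
  assumes s2: "s2 > 0" and g[measurable]: "g \<in> borel_measurable borel" and n: "n \<ge> 1"
    and fX: "finite X" and vX: "\<forall>t\<in>{1..n}. v t \<in> X"
  shows "(\<integral>\<^sup>+ z. gbar g n z \<partial>channel_out s2 n v) = (\<Sum>x\<in>X. ennreal (cw_type n v x) *
            (\<integral>\<^sup>+ w. g (x + w) * ennreal (cgauss_pdf s2 0 w) \<partial>lborel))"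
proof -
  define G where "G x = (\<integral>\<^sup>+ w. g (x + w) * ennreal (cgauss_pdf s2 0 w) \<partial>lborel)" for x
  let ?Mt = "\<lambda>t. density lborel (\<lambda>y. ennreal (cgauss_pdf s2 (v t) y))"
  have comp: "(\<integral>\<^sup>+ z. g (z t) \<partial>channel_out s2 n v) = G (v t)" if t: "t \<in> {1..n}" for t
  proof -
    have "(\<integral>\<^sup>+ z. g (z t) \<partial>channel_out s2 n v) = (\<integral>\<^sup>+ y. g y \<partial>distr (channel_out s2 n v) (?Mt t) (\<lambda>z. z t))"
      unfolding channel_out_def
      by (subst nn_integral_distr[OF measurable_component_singleton]) (use t in auto)
    also have "distr (channel_out s2 n v) (?Mt t) (\<lambda>z. z t) = ?Mt t"
      unfolding channel_out_def by (rule distr_PiM_component) (use t prob_space_cgauss[OF s2] in auto)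
    finally show ?thesis by (simp add: cgauss_expect[OF s2 g] G_def)
  qed
  have "(\<integral>\<^sup>+ z. gbar g n z \<partial>channel_out s2 n v) = (\<integral>\<^sup>+ z. (\<Sum>t\<in>{1..n}. g (z t)) * inverse (of_nat n) \<partial>channel_out s2 n v)"
    unfolding gbar_def divide_ennreal_def ..
  also have "\<dots> = (\<Sum>t\<in>{1..n}. (\<integral>\<^sup>+ z. g (z t) \<partial>channel_out s2 n v)) * inverse (of_nat n)"
    unfolding channel_out_def
    by (subst nn_integral_multc, measurable, subst nn_integral_sum, measurable)
  also have "\<dots> = (\<Sum>t\<in>{1..n}. G (v t)) * inverse (of_nat n)"
    using comp by simp
  also have "(\<Sum>t\<in>{1..n}. G (v t)) = (\<Sum>x\<in>X. (\<Sum>t\<in>{t\<in>{1..n}. v t = x}. G (v t)))"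
    by (rule sum.group[symmetric]) (use fX vX in auto)
  also have "\<dots> = (\<Sum>x\<in>X. of_nat (card {t\<in>{1..n}. v t = x}) * G x)"
    by (rule sum.cong) auto
  also have "(\<Sum>x\<in>X. of_nat (card {t\<in>{1..n}. v t = x}) * G x) * inverse (of_nat n)
       = (\<Sum>x\<in>X. ennreal (cw_type n v x) * G x)"
    unfolding sum_distrib_right
  proof (rule sum.cong)
    fix x
    have "ennreal (cw_type n v x) = of_nat (card {t\<in>{1..n}. v t = x}) * inverse (of_nat n)"
      unfolding cw_type_def using n
      by (simp add: divide_ennreal[symmetric] ennreal_of_nat_eq_real_of_nat divide_ennreal_def)
    then show "of_nat (card {t\<in>{1..n}. v t = x}) * G x * inverse (of_nat n) = ennreal (cw_type n v x) * G x"
      by (simp add: mult_ac)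
  qed simp
  finally show ?thesis unfolding G_def .
qed

lemma markov_step:
  assumes s2: "s2 > 0" and g[measurable]: "g \<in> borel_measurable borel"
  shows "ennreal B * ennreal (1 - measure (channel_out s2 n v) {z \<in> space (channel_out s2 n v). gbar g n z < ennreal B})
     \<le> (\<integral>\<^sup>+ z. gbar g n z \<partial>channel_out s2 n v)"
proof -
  let ?C = "channel_out s2 n v"
  interpret prob_space ?C by (rule prob_space_channel[OF s2])
  let ?A = "{z \<in> space ?C. gbar g n z < ennreal B}"
  let ?S = "{z \<in> space ?C. ennreal B \<le> gbar g n z}"
  have A: "?A \<in> sets ?C" by measurable
  have S: "?S \<in> sets ?C" by measurable
  have "space ?C - ?A = ?S" by (auto simp: not_less)
  then have "1 - measure ?C ?A = measure ?C ?S" using prob_compl[OF A] by simp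
  then have "ennreal (1 - measure ?C ?A) = emeasure ?C ?S" by (simp add: emeasure_eq_measure)
  then have "ennreal B * ennreal (1 - measure ?C ?A) = (\<integral>\<^sup>+ z. ennreal B * indicator ?S z \<partial>?C)"
    using S by (simp add: nn_integral_cmult_indicator)
  also have "\<dots> \<le> (\<integral>\<^sup>+ z. gbar g n z \<partial>?C)"
    by (rule nn_integral_mono) (auto split: split_indicator)
  finally show ?thesis .
qed

theorem corollary1:
  fixes n M :: nat and X :: "complex set" and sigma P eps B delta :: real
    and g :: "complex \<Rightarrow> ennreal"
    and u :: "nat \<Rightarrow> nat \<Rightarrow> complex" and D :: "nat \<Rightarrow> (nat \<Rightarrow> complex) set"
  assumes "n \<ge> 1" and "M \<ge> 1" and "finite X" and "X \<noteq> {}"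
    and "sigma > 0" and "P > 0"
    and "g \<in> borel_measurable borel"
    and "eps > 0" and "B > 0"
    and "is_code_full X P (sigma\<^sup>2) g n M eps B delta u D"
  shows "delta \<ge> enn2real (1 - (\<Sum>x\<in>X. ennreal (code_type n M u x) *
            (\<integral>\<^sup>+ w. g (x + w) * ennreal (cgauss_pdf (sigma\<^sup>2) 0 w) \<partial>lborel)) / ennreal B)"
proof -
  note n = assms(1) and Mpos = assms(2) and fX = assms(3) and g = assms(7) and Bpos = assms(9)
  have s2: "sigma\<^sup>2 > 0" using assms(5) by simp
  define s2 where "s2 = sigma\<^sup>2"
  have s2p: "s2 > 0" using s2 s2_def by simp
  define G where "G x = (\<integral>\<^sup>+ w. g (x + w) * ennreal (cgauss_pdf s2 0 w) \<partial>lborel)" for x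
  define S where "S = (\<Sum>x\<in>X. ennreal (code_type n M u x) * G x)"
  define th where "th i = measure (channel_out s2 n (u i)) {z \<in> space (channel_out s2 n (u i)). gbar g n z < ennreal B}" for i
  define E where "E i = (\<integral>\<^sup>+ z. gbar g n z \<partial>channel_out s2 n (u i))" for i
  have code: "is_code X P n M u D" and thd: "avg_theta s2 g B n M u < delta"
    using assms(10) unfolding is_code_full_def is_code_eps_def s2_def by auto
  have uX: "\<forall>t\<in>{1..n}. u i t \<in> X" if "i \<in> {1..M}" for i
    using code that unfolding is_code_def by auto
  have Ei: "E i = (\<Sum>x\<in>X. ennreal (cw_type n (u i) x) * G x)" if "i \<in> {1..M}" for i
    unfolding E_def G_def by (rule channel_expect[OF s2p g n fX uX[OF that]])
  have cw0: "0 \<le> cw_type n v x" for v x unfolding cw_type_def by simp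
  have "(\<Sum>i\<in>{1..M}. E i) = (\<Sum>i\<in>{1..M}. \<Sum>x\<in>X. ennreal (cw_type n (u i) x) * G x)"
    using Ei by simp
  also have "\<dots> = (\<Sum>x\<in>X. (\<Sum>i\<in>{1..M}. ennreal (cw_type n (u i) x)) * G x)"
    by (subst sum.swap) (simp add: sum_distrib_right)
  also have "\<dots> = (\<Sum>x\<in>X. of_nat M * (ennreal (code_type n M u x) * G x))"
  proof (rule sum.cong)
    fix x
    have "(\<Sum>i\<in>{1..M}. ennreal (cw_type n (u i) x)) = ennreal (\<Sum>i\<in>{1..M}. cw_type n (u i) x)"
      using cw0 by simp
    also have "(\<Sum>i\<in>{1..M}. cw_type n (u i) x) = real M * code_type n M u x"
      unfolding code_type_def using Mpos by simp
    also have "ennreal (real M * code_type n M u x) = of_nat M * ennreal (code_type n M u x)"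
      by (simp add: ennreal_mult' ennreal_of_nat_eq_real_of_nat)
    finally show "(\<Sum>i\<in>{1..M}. ennreal (cw_type n (u i) x)) * G x = of_nat M * (ennreal (code_type n M u x) * G x)"
      by (simp add: mult.assoc)
  qed simp
  also have "\<dots> = of_nat M * S" unfolding S_def by (simp add: sum_distrib_left)
  finally have sumE: "(\<Sum>i\<in>{1..M}. E i) = of_nat M * S" .
  have th01: "0 \<le> th i \<and> th i \<le> 1" for i
  proof -
    interpret prob_space "channel_out s2 n (u i)" by (rule prob_space_channel[OF s2p])
    show ?thesis unfolding th_def by simp
  qed
  have "(\<Sum>i\<in>{1..M}. ennreal B * ennreal (1 - th i)) \<le> (\<Sum>i\<in>{1..M}. E i)"
    unfolding th_def E_def by (rule sum_mono) (rule markov_step[OF s2p g])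
  also have "(\<Sum>i\<in>{1..M}. ennreal B * ennreal (1 - th i)) = ennreal (B * (\<Sum>i\<in>{1..M}. 1 - th i))"
    using th01 Bpos by (simp add: ennreal_mult[symmetric] sum_distrib_left)
  finally have key: "ennreal (B * (\<Sum>i\<in>{1..M}. 1 - th i)) \<le> of_nat M * S" using sumE by simp
  have avg: "avg_theta s2 g B n M u = (\<Sum>i\<in>{1..M}. th i) / real M"
    unfolding avg_theta_def th_def ..
  have avg0: "0 \<le> avg_theta s2 g B n M u" unfolding avg using th01 by (simp add: sum_nonneg)
  have goal: "enn2real (1 - S / ennreal B) \<le> avg_theta s2 g B n M u"
  proof (cases S)
    case top
    then have "S / ennreal B = top" using Bpos by (simp add: ennreal_top_divide)
    then show ?thesis using avg0 by (simp add: minus_top_ennreal)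
  next
    case (real s)
    then have s0: "0 \<le> s" using real by simp
    have "ennreal (B * (\<Sum>i\<in>{1..M}. 1 - th i)) \<le> ennreal (real M * s)"
      using key real by (simp add: ennreal_mult ennreal_of_nat_eq_real_of_nat s0)
    then have k2: "B * (\<Sum>i\<in>{1..M}. 1 - th i) \<le> real M * s" using s0 by simp
    have "(\<Sum>i\<in>{1..M}. 1 - th i) = real M - (\<Sum>i\<in>{1..M}. th i)"
      by (simp add: sum_subtractf)
    with k2 have k3: "B * (real M - (\<Sum>i\<in>{1..M}. th i)) \<le> real M * s" by simp
    have Mp: "real M > 0" using Mpos by simp
    have k4: "1 - s / B \<le> (\<Sum>i\<in>{1..M}. th i) / real M"
      using k3 Mp Bpos by (simp add: field_simps)
    have "1 - S / ennreal B = ennreal (1 - s / B)"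
      using real s0 Bpos by (simp add: divide_ennreal ennreal_minus[symmetric])
    moreover have "enn2real (ennreal (1 - s / B)) \<le> (\<Sum>i\<in>{1..M}. th i) / real M"
      using k4 avg0 avg by (cases "0 \<le> 1 - s / B") (auto simp: ennreal_neg)
    ultimately show ?thesis using avg by simp
  qed
  show ?thesis using goal thd unfolding S_def G_def s2_def by simp
qed

end
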